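(* Let $p,q$ be positive integers, let $e\in\mathbb{R}^p$ be the vector of all ones, and let $$L:=\{(x,u)\in\mathbb{R}^p\times\mathbb{R}^q:x\ge\|u\|e\},\qquad M:=\{(x,u)\in\mathbb{R}^p\times\mathbb{R}^q:\langle x,e\rangle\ge\|u\|,\ x\ge0\}.$$ Let $(z,w)\in\mathbb{R}^p\times\mathbb{R}^q$. Then: 1. If $z^+\ge\|w\|e$, then $P_L(z,w)=(z^+,w)$ and $P_M(-z,-w)=(z^-,0)$. 2. If $\langle z^-,e\rangle\ge\|w\|$, then $P_L(z,w)=(z^+,0)$ and $P_M(-z,-w)=(z^-,-w)$. 3. If $z^+\not\ge\|w\|e$ and $\langle z^-,e\rangle<\|w\|$, then the piecewise linear equation $$\lambda\|w\|=\left\langle e,[(\lambda+1)z-\|w\|e]^-\right\rangle$$ has a unique positive solution $\lambda>0$, and for this $\lambda$, $$P_L(z,w)=\left(\Big[z-\tfrac{1}{\lambda+1}\|w\|e\Big]^++\tfrac{1}{\lambda+1}\|w\|e,\ \tfrac{1}{\lambda+1}w\right),\qquad P_M(-z,-w)=\left(\Big[z-\tfrac{1}{\lambda+1}\|w\|e\Big]^-,\ -\tfrac{\lambda}{\lambda+1}w\right).$$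
   Context: For a closed convex set $C$, $P_C(x):=\operatorname{argmin}\{\|x-y\|:y\in C\}$ is the metric (orthogonal) projection onto $C$, with respect to the Euclidean norm on $\mathbb{R}^p\times\mathbb{R}^q\cong\mathbb{R}^{p+q}$ (inner product $\langle(x,u),(y,v)\rangle=\langle x,y\rangle+\langle u,v\rangle$). The order $\ge$ on vectors is componentwise; $z^+\not\ge\|w\|e$ means that $z^+\ge\|w\|e$ fails. For $\alpha\in\mathbb{R}$, $\alpha^+:=\max(\alpha,0)$, $\alpha^-:=\max(-\alpha,0)$, applied componentwise to vectors. $L$ and $M$ are mutually dual proper cones (the extended second order cones). *)

theory Defs
  imports "HOL-Analysis.Analysis"
begin

definition ones :: "real^'p" where
  "ones = (\<chi> i. 1)"

definition vpos :: "real^'p \<Rightarrow> real^'p" where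
  "vpos v = (\<chi> i. max (v $ i) 0)"

definition vneg :: "real^'p \<Rightarrow> real^'p" where
  "vneg v = (\<chi> i. max (- (v $ i)) 0)"

definition coneL :: "((real^'p) \<times> (real^'q)) set" where
  "coneL = {(x, u). x \<ge> norm u *\<^sub>R ones}"

definition coneM :: "((real^'p) \<times> (real^'q)) set" where
  "coneM = {(x, u). x \<bullet> ones \<ge> norm u \<and> x \<ge> 0}"

end

theory Submission
  imports Defs
begin


lemma ones_nth[simp]: "ones $ i = 1" by (simp add: ones_def)
lemma vpos_nth[simp]: "vpos v $ i = max (v $ i) 0" by (simp add: vpos_def)
lemma vneg_nth[simp]: "vneg v $ i = max (- (v $ i)) 0" by (simp add: vneg_def)
lemma inner_ones: "x \<bullet> ones = (\<Sum>i\<in>UNIV. x $ i)" by (simp add: inner_vec_def)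
lemma inner_ones': "ones \<bullet> x = (\<Sum>i\<in>UNIV. x $ i)" by (simp add: inner_vec_def)

lemma coneL_iff: "(x, u) \<in> coneL \<longleftrightarrow> (\<forall>i. norm u \<le> x $ i)"
  by (simp add: coneL_def less_eq_vec_def)
lemma coneM_iff: "(x, u) \<in> coneM \<longleftrightarrow> norm u \<le> x \<bullet> ones \<and> (\<forall>i. 0 \<le> x $ i)"
  by (simp add: coneM_def less_eq_vec_def)

lemma closed_coneL: "closed (coneL :: ((real^'p)\<times>(real^'q)) set)"
proof -
  have "coneL = (\<Inter>i. {p. norm (snd p) \<le> fst p $ i})"
    by (auto simp: coneL_def less_eq_vec_def)
  moreover have "closed {p::(real^'p)\<times>(real^'q). norm (snd p) \<le> fst p $ i}" for i
    by (intro closed_Collect_le continuous_intros)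
  ultimately show ?thesis by (metis (no_types) closed_INT closed_Int)
qed

lemma closed_coneM: "closed (coneM :: ((real^'p)\<times>(real^'q)) set)"
proof -
  have "coneM = {p. norm (snd p) \<le> fst p \<bullet> ones} \<inter> (\<Inter>i. {p. 0 \<le> fst p $ i})"
    by (auto simp: coneM_def less_eq_vec_def)
  moreover have "closed {p::(real^'p)\<times>(real^'q). 0 \<le> fst p $ i}" for i
    by (intro closed_Collect_le continuous_intros)
  moreover have "closed {p::(real^'p)\<times>(real^'q). norm (snd p) \<le> fst p \<bullet> ones}"
    by (intro closed_Collect_le continuous_intros)
  ultimately show ?thesis by (metis (no_types) closed_INT closed_Int)
qed

lemma convex_coneL: "convex (coneL :: ((real^'p)\<times>(real^'q)) set)"
  unfolding convex_def
proof (clarify)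
  fix x y :: "real^'p" and u v :: "real^'q" and a b :: real
  assume xu: "(x, u) \<in> coneL" and yv: "(y, v) \<in> coneL" and ab: "0 \<le> a" "0 \<le> b" "a + b = 1"
  show "a *\<^sub>R (x, u) + b *\<^sub>R (y, v) \<in> coneL"
    unfolding scaleR_Pair plus_prod_def prod.case fst_conv snd_conv coneL_iff
  proof
    fix i
    have "norm (a *\<^sub>R u + b *\<^sub>R v) \<le> a * norm u + b * norm v"
      using norm_triangle_ineq[of "a *\<^sub>R u" "b *\<^sub>R v"] ab by simp
    also have "\<dots> \<le> a * x $ i + b * y $ i"
      using xu yv ab by (intro add_mono mult_left_mono) (auto simp: coneL_iff)
    finally show "norm (a *\<^sub>R u + b *\<^sub>R v) \<le> (a *\<^sub>R x + b *\<^sub>R y) $ i" by simp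
  qed
qed

lemma convex_coneM: "convex (coneM :: ((real^'p)\<times>(real^'q)) set)"
  unfolding convex_def
proof (clarify)
  fix x y :: "real^'p" and u v :: "real^'q" and a b :: real
  assume xu: "(x, u) \<in> coneM" and yv: "(y, v) \<in> coneM" and ab: "0 \<le> a" "0 \<le> b" "a + b = 1"
  show "a *\<^sub>R (x, u) + b *\<^sub>R (y, v) \<in> coneM"
    unfolding scaleR_Pair plus_prod_def prod.case fst_conv snd_conv coneM_iff
  proof
    have "norm (a *\<^sub>R u + b *\<^sub>R v) \<le> a * norm u + b * norm v"
      using norm_triangle_ineq[of "a *\<^sub>R u" "b *\<^sub>R v"] ab by simp
    also have "\<dots> \<le> a * (x \<bullet> ones) + b * (y \<bullet> ones)"
      using xu yv ab by (intro add_mono mult_left_mono) (auto simp: coneM_iff)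
    finally show "norm (a *\<^sub>R u + b *\<^sub>R v) \<le> (a *\<^sub>R x + b *\<^sub>R y) \<bullet> ones"
      by (simp add: inner_add_left)
    show "\<forall>i. 0 \<le> (a *\<^sub>R x + b *\<^sub>R y) $ i" using xu yv ab by (auto simp: coneM_iff)
  qed
qed

lemma pairing:
  assumes "(x, u) \<in> coneL" "(y, v) \<in> coneM"
  shows "0 \<le> (x, u) \<bullet> (y, v)"
proof -
  have "norm u * (y \<bullet> ones) = (\<Sum>i\<in>UNIV. norm u * y $ i)"
    by (simp add: inner_ones sum_distrib_left)
  also have "\<dots> \<le> (\<Sum>i\<in>UNIV. x $ i * y $ i)"
    using assms by (intro sum_mono mult_right_mono) (auto simp: coneL_iff coneM_iff)
  also have "\<dots> = x \<bullet> y" by (simp add: inner_vec_def)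
  finally have 1: "norm u * (y \<bullet> ones) \<le> x \<bullet> y" .
  have "norm u * norm v \<le> norm u * (y \<bullet> ones)"
    using assms by (intro mult_left_mono) (auto simp: coneM_iff)
  moreover have "- (u \<bullet> v) \<le> norm u * norm v"
    using Cauchy_Schwarz_ineq2[of u v] by simp
  ultimately show ?thesis using 1 by simp
qed

lemma proj_char:
  fixes x y :: "'a::euclidean_space"
  assumes "convex S" "closed S" "y \<in> S" "\<forall>s\<in>S. (x - y) \<bullet> (s - y) \<le> 0"
  shows "closest_point S x = y"
proof -
  have "dist x y \<le> dist x s" if "s \<in> S" for s
  proof -
    have "(x - s) = (x - y) - (s - y)" by simp
    then have "norm (x - s)^2 = norm (x - y)^2 - 2 * ((x - y) \<bullet> (s - y)) + norm (s - y)^2"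
      by (simp add: power2_norm_eq_inner inner_diff_left inner_diff_right inner_commute)
    then have "norm (x - y)^2 \<le> norm (x - s)^2" using assms(4) that by (smt (verit) zero_le_power2)
    then show ?thesis by (simp add: dist_norm power2_le_iff_abs_le)
  qed
  then show ?thesis using closest_point_unique[OF assms(1-3)] by auto
qed

lemma decomp:
  fixes a b :: "(real^'p)\<times>(real^'q)"
  assumes "a \<in> coneL" "b \<in> coneM" "a \<bullet> b = 0" "x = a - b"
  shows "closest_point coneL x = a \<and> closest_point coneM (- x) = b"
proof
  show "closest_point coneL x = a"
  proof (rule proj_char[OF convex_coneL closed_coneL assms(1)], intro ballI)
    fix s :: "(real^'p)\<times>(real^'q)" assume "s \<in> coneL"
    then have "0 \<le> s \<bullet> b" using pairing[of "fst s" "snd s" "fst b" "snd b"] assms(2) by simp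
    then show "(x - a) \<bullet> (s - a) \<le> 0" using assms(3,4)
      by (simp add: inner_diff_left inner_diff_right inner_commute)
  qed
  show "closest_point coneM (- x) = b"
  proof (rule proj_char[OF convex_coneM closed_coneM assms(2)], intro ballI)
    fix s :: "(real^'p)\<times>(real^'q)" assume "s \<in> coneM"
    then have "0 \<le> a \<bullet> s" using pairing[of "fst a" "snd a" "fst s" "snd s"] assms(1) by simp
    then show "(- x - b) \<bullet> (s - b) \<le> 0" using assms(3,4)
      by (simp add: inner_diff_left inner_diff_right inner_commute)
  qed
qed

lemma vpos_vneg_inner: "vpos v \<bullet> vneg v = 0"
  unfolding inner_vec_def by (intro sum.neutral) (auto simp: max_def)

lemma vpos_minus_vneg: "vpos v - vneg v = v"
  by (simp add: vec_eq_iff max_def)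

lemma vneg_nonneg_inner: "0 \<le> vneg v \<bullet> ones"
  unfolding inner_ones by (intro sum_nonneg) simp

lemma case1:
  fixes z :: "real^'p" and w :: "real^'q"
  assumes "vpos z \<ge> norm w *\<^sub>R ones"
  shows "closest_point coneL (z, w) = (vpos z, w) \<and> closest_point coneM (-z, -w) = (vneg z, 0)"
proof -
  have "closest_point coneL (z, w) = (vpos z, w) \<and> closest_point coneM (- (z, w)) = (vneg z, 0)"
    by (rule decomp) (use assms in \<open>auto simp: coneL_def coneM_iff vpos_vneg_inner vpos_minus_vneg vneg_nonneg_inner\<close>)
  then show ?thesis by simp
qed

lemma case2:
  fixes z :: "real^'p" and w :: "real^'q"
  assumes "vneg z \<bullet> ones \<ge> norm w"
  shows "closest_point coneL (z, w) = (vpos z, 0) \<and> closest_point coneM (-z, -w) = (vneg z, -w)"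
proof -
  have "closest_point coneL (z, w) = (vpos z, 0) \<and> closest_point coneM (- (z, w)) = (vneg z, -w)"
    by (rule decomp) (use assms in \<open>auto simp: coneL_iff coneM_iff vpos_vneg_inner vpos_minus_vneg\<close>)
  then show ?thesis by simp
qed

lemma max_scale: "(k::real) > 0 \<Longrightarrow> max (k * a) 0 = k * max a 0"
  by (auto simp: max_def mult_le_0_iff zero_le_mult_iff)

lemma case3_proj:
  fixes z :: "real^'p" and w :: "real^'q"
  assumes lam: "lam > 0"
    and eq: "lam * norm w = ones \<bullet> vneg ((lam + 1) *\<^sub>R z - norm w *\<^sub>R ones)"
  shows "closest_point coneL (z, w) =
            (vpos (z - (1 / (lam + 1)) *\<^sub>R (norm w *\<^sub>R ones))
               + (1 / (lam + 1)) *\<^sub>R (norm w *\<^sub>R ones),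
             (1 / (lam + 1)) *\<^sub>R w) \<and>
          closest_point coneM (-z, -w) =
            (vneg (z - (1 / (lam + 1)) *\<^sub>R (norm w *\<^sub>R ones)),
             - (lam / (lam + 1)) *\<^sub>R w)"
proof -
  define c where "c = norm w"
  define t where "t = 1 / (lam + 1)"
  define v where "v = z - t *\<^sub>R (c *\<^sub>R ones)"
  have c0: "c \<ge> 0" by (simp add: c_def)
  have t0: "t > 0" "t < 1" using lam by (auto simp: t_def)
  have lt: "lam / (lam + 1) = 1 - t" using lam by (simp add: t_def field_simps)
  have comp: "max (c - (lam + 1) * z $ i) 0 = (lam + 1) * max (t * c - z $ i) 0" for i
  proof -
    have "c - (lam + 1) * z $ i = (lam + 1) * (t * c - z $ i)"
      using lam by (simp add: t_def field_simps)
    then show ?thesis using max_scale[of "lam + 1"] lam by simp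
  qed
  have "lam * c = (\<Sum>i\<in>UNIV. max (- ((lam + 1) * z $ i - c)) 0)"
    using eq by (simp add: inner_ones' c_def)
  also have "\<dots> = (lam + 1) * (ones \<bullet> vneg v)"
    by (simp add: comp inner_ones' sum_distrib_left v_def)
  finally have nv: "ones \<bullet> vneg v = (1 - t) * c"
    using lam by (simp add: t_def field_simps)
  have A: "(vpos v + (t * c) *\<^sub>R ones, t *\<^sub>R w) \<in> coneL"
    using t0 by (auto simp: coneL_iff c_def)
  have B: "(vneg v, - (1 - t) *\<^sub>R w) \<in> coneM"
    using t0 nv by (auto simp: coneM_iff c_def inner_commute)
  have "(vpos v + (t * c) *\<^sub>R ones) \<bullet> vneg v = t * c * (ones \<bullet> vneg v)"
    by (simp add: inner_add_left vpos_vneg_inner)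
  then have AB: "(vpos v + (t * c) *\<^sub>R ones, t *\<^sub>R w) \<bullet> (vneg v, - (1 - t) *\<^sub>R w) = 0"
  proof -
    have ww: "w \<bullet> w = c * c" by (simp add: c_def power2_norm_eq_inner[symmetric] power2_eq_square)
    have "(t *\<^sub>R w) \<bullet> (- (1 - t) *\<^sub>R w) = - (t * (1 - t)) * (w \<bullet> w)" by (simp add: algebra_simps)
    with ww nv \<open>(vpos v + (t * c) *\<^sub>R ones) \<bullet> vneg v = t * c * (ones \<bullet> vneg v)\<close>
    show ?thesis by (simp only: inner_Pair) (simp add: algebra_simps)
  qed
  have D: "(z, w) = (vpos v + (t * c) *\<^sub>R ones, t *\<^sub>R w) - (vneg v, - (1 - t) *\<^sub>R w)"
  proof -
    have "vpos v + (t * c) *\<^sub>R ones - vneg v = z"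
      using vpos_minus_vneg[of v] by (simp add: v_def algebra_simps)
    moreover have "t *\<^sub>R w - (t - 1) *\<^sub>R w = w" by (simp add: algebra_simps)
    ultimately show ?thesis by simp
  qed
  from decomp[OF A B AB D] show ?thesis
    by (simp add: v_def t_def c_def lt)
qed

lemma case3_ex1:
  fixes z :: "real^'p" and w :: "real^'q"
  assumes h1: "\<not> (vpos z \<ge> norm w *\<^sub>R ones)" and h2: "vneg z \<bullet> ones < norm w"
  shows "\<exists>!lam::real. lam > 0 \<and>
            lam * norm w = ones \<bullet> vneg ((lam + 1) *\<^sub>R z - norm w *\<^sub>R ones)"
proof -
  define c where "c = norm w"
  define F where "F t = (\<Sum>i\<in>UNIV. max (t * c - z $ i) 0) + t * c - c" for t
  obtain i0 where i0: "max (z $ i0) 0 < c"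
    using h1 by (auto simp: less_eq_vec_def c_def not_le)
  have c0: "c > 0" using i0 by linarith
  have equiv: "(lam * c = ones \<bullet> vneg ((lam + 1) *\<^sub>R z - c *\<^sub>R ones)) \<longleftrightarrow> F (1 / (lam + 1)) = 0"
    if lam: "lam > 0" for lam
  proof -
    define t where "t = 1 / (lam + 1)"
    have comp: "max (c - (lam + 1) * z $ i) 0 = (lam + 1) * max (t * c - z $ i) 0" for i
    proof -
      have "c - (lam + 1) * z $ i = (lam + 1) * (t * c - z $ i)"
        using lam by (simp add: t_def field_simps)
      then show ?thesis using max_scale[of "lam + 1"] lam by simp
    qed
    have "ones \<bullet> vneg ((lam + 1) *\<^sub>R z - c *\<^sub>R ones) = (lam + 1) * (\<Sum>i\<in>UNIV. max (t * c - z $ i) 0)"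
      by (simp add: inner_ones' comp sum_distrib_left)
    moreover have "(lam * c = (lam + 1) * S) \<longleftrightarrow> S + t * c - c = 0" for S
      using lam by (simp add: t_def field_simps) (auto simp: algebra_simps)
    ultimately show ?thesis by (simp add: F_def t_def)
  qed
  have mono: "F t1 < F t2" if "t1 < t2" for t1 t2
  proof -
    have "(\<Sum>i\<in>UNIV. max (t1 * c - z $ i) 0) \<le> (\<Sum>i\<in>UNIV. max (t2 * c - z $ i) 0)"
      using that c0 by (intro sum_mono max.mono) (auto intro!: mult_right_mono)
    moreover have "t1 * c < t2 * c" using that c0 by simp
    ultimately show ?thesis by (simp add: F_def)
  qed
  have F0: "F 0 < 0"
    using h2 by (simp add: F_def inner_ones c_def)
  have "0 < max (1 * c - z $ i0) 0" using i0 by simp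
  also have "\<dots> \<le> (\<Sum>i\<in>UNIV. max (1 * c - z $ i) 0)"
    by (rule member_le_sum) auto
  finally have F1: "F 1 > 0" by (simp add: F_def)
  have cont: "continuous_on {0..1} F"
    unfolding F_def by (intro continuous_intros)
  obtain t where t: "0 \<le> t" "t \<le> 1" "F t = 0"
    using IVT'[of F 0 0 1, OF less_imp_le[OF F0] less_imp_le[OF F1] _ cont] by auto
  have tpos: "0 < t" "t < 1" using t F0 F1 by (auto simp: order_le_less)
  define lam where "lam = 1 / t - 1"
  have lampos: "lam > 0" using tpos by (simp add: lam_def field_simps)
  have tl: "1 / (lam + 1) = t" using tpos by (simp add: lam_def)
  show ?thesis
  proof (rule ex1I[of _ lam])
    show "lam > 0 \<and> lam * norm w = ones \<bullet> vneg ((lam + 1) *\<^sub>R z - norm w *\<^sub>R ones)"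
      using lampos equiv[OF lampos] tl t(3) by (simp add: c_def)
  next
    fix l assume l: "l > 0 \<and> l * norm w = ones \<bullet> vneg ((l + 1) *\<^sub>R z - norm w *\<^sub>R ones)"
    then have "F (1 / (l + 1)) = 0" using equiv[of l] by (simp add: c_def)
    then have "1 / (l + 1) = t"
      using mono t(3) by (metis less_irrefl linorder_neqE_linordered_idom)
    then have "1 / (l + 1) = 1 / (lam + 1)" using tl by simp
    then have "l + 1 = lam + 1" by (metis inverse_eq_divide inverse_inverse_eq)
    then show "l = lam" by simp
  qed
qed



theorem theorem2:
  fixes z :: "real^'p" and w :: "real^'q"
  shows
    "(vpos z \<ge> norm w *\<^sub>R ones \<longrightarrow>
        closest_point coneL (z, w) = (vpos z, w) \<and>
        closest_point coneM (-z, -w) = (vneg z, 0))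
   \<and> (vneg z \<bullet> ones \<ge> norm w \<longrightarrow>
        closest_point coneL (z, w) = (vpos z, 0) \<and>
        closest_point coneM (-z, -w) = (vneg z, -w))
   \<and> (\<not> (vpos z \<ge> norm w *\<^sub>R ones) \<and> vneg z \<bullet> ones < norm w \<longrightarrow>
        (\<exists>!lam::real. lam > 0 \<and>
            lam * norm w = ones \<bullet> vneg ((lam + 1) *\<^sub>R z - norm w *\<^sub>R ones))
      \<and> (\<forall>lam::real. lam > 0 \<and>
            lam * norm w = ones \<bullet> vneg ((lam + 1) *\<^sub>R z - norm w *\<^sub>R ones) \<longrightarrow>
          closest_point coneL (z, w) =
            (vpos (z - (1 / (lam + 1)) *\<^sub>R (norm w *\<^sub>R ones))
               + (1 / (lam + 1)) *\<^sub>R (norm w *\<^sub>R ones),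
             (1 / (lam + 1)) *\<^sub>R w) \<and>
          closest_point coneM (-z, -w) =
            (vneg (z - (1 / (lam + 1)) *\<^sub>R (norm w *\<^sub>R ones)),
             - (lam / (lam + 1)) *\<^sub>R w)))"
  using case1[where z=z and w=w] case2[where z=z and w=w] case3_ex1[where z=z and w=w] case3_proj[where z=z and w=w] by blast

end
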